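(* Let $D$ be a spatial graph diagram and consider any Wirtinger coloring process on its truncated diagram, i.e. a sequence of stages $(A_0,f_0)\to(A_1,f_1)\to\cdots$ where $A_0$ is the set of seed strands and each subsequent stage is obtained by one coloring move. Then at every stage, for each color $c$, the set of strands colored $c$ is either (1) a single connected arc, if the seed of color $c$ is a single strand, or (2) a union of $n$ disjoint arcs, if the seed of color $c$ is the set of strands at a deleted vertex of degree $n$.
   Context: A spatial graph diagram $D$ is a generic planar projection of a spatial graph with crossing information. Its truncated diagram is obtained by deleting all vertices of degree $>2$, leaving free ends. A strand is an arc connecting an undercrossing to a free end, or connecting two undercrossings. A coloring process starts with $k$ seeds, each colored with its own color: a seed is either a single strand or the set of all strands incident to one deleted vertex (a "pod", all such strands getting the same color). At stage $i$, $A_i$ is the set of colored strands and $f_i\colon A_i\to\{\text{colors}\}$ the coloring. A coloring move: at a crossing whose overstrand is colored and one of whose two understrands is colored, color the other understrand with the color of that colored understrand; thus $A_{i+1}=A_i\cup\{s\}$ for one new strand $s$. *)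

theory Defs
  imports Main
begin

text \<open>S  : the strands;  X : the crossings, with overstrand ov x and the two
  understrands u1 x, u2 x (the two arcs ending at the undercrossing of x);
  E  : the free ends created by deleting vertices (and endpoints of degree 1);
  es e is the strand on which the free end e lies, ev e the (original) vertex
  it came from.  Every strand has exactly two endpoints, each of which is
  either an undercrossing or a free end.\<close>

definition diagram ::
  "'s set \<Rightarrow> 'x set \<Rightarrow> ('x \<Rightarrow> 's) \<Rightarrow> ('x \<Rightarrow> 's) \<Rightarrow> ('x \<Rightarrow> 's)
   \<Rightarrow> 'e set \<Rightarrow> ('e \<Rightarrow> 's) \<Rightarrow> ('e \<Rightarrow> 'v) \<Rightarrow> bool" where
  "diagram S X ov u1 u2 E es ev \<longleftrightarrow>
     finite S \<and> finite X \<and> finite E \<and>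
     (\<forall>x\<in>X. ov x \<in> S \<and> u1 x \<in> S \<and> u2 x \<in> S) \<and>
     (\<forall>e\<in>E. es e \<in> S) \<and>
     (\<forall>s\<in>S. card {x\<in>X. u1 x = s} + card {x\<in>X. u2 x = s} + card {e\<in>E. es e = s} = 2)"

definition vdegree :: "'e set \<Rightarrow> ('e \<Rightarrow> 'v) \<Rightarrow> 'v \<Rightarrow> nat" where
  "vdegree E ev v = card {e\<in>E. ev e = v}"

definition pod :: "'e set \<Rightarrow> ('e \<Rightarrow> 's) \<Rightarrow> ('e \<Rightarrow> 'v) \<Rightarrow> 'v \<Rightarrow> 's set" where
  "pod E es ev v = es ` {e\<in>E. ev e = v}"

definition joined :: "'x set \<Rightarrow> ('x \<Rightarrow> 's) \<Rightarrow> ('x \<Rightarrow> 's) \<Rightarrow> 's \<Rightarrow> 's \<Rightarrow> bool" where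
  "joined X u1 u2 s t \<longleftrightarrow> (\<exists>x\<in>X. (u1 x = s \<and> u2 x = t) \<or> (u1 x = t \<and> u2 x = s))"

definition is_arc :: "'x set \<Rightarrow> ('x \<Rightarrow> 's) \<Rightarrow> ('x \<Rightarrow> 's) \<Rightarrow> 's set \<Rightarrow> bool" where
  "is_arc X u1 u2 K \<longleftrightarrow>
     (\<exists>xs. xs \<noteq> [] \<and> distinct xs \<and> set xs = K \<and>
        (\<forall>i. Suc i < length xs \<longrightarrow> joined X u1 u2 (xs ! i) (xs ! Suc i)))"

definition union_of_disjoint_arcs ::
  "'x set \<Rightarrow> ('x \<Rightarrow> 's) \<Rightarrow> ('x \<Rightarrow> 's) \<Rightarrow> nat \<Rightarrow> 's set \<Rightarrow> bool" where
  "union_of_disjoint_arcs X u1 u2 n K \<longleftrightarrow>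
     (\<exists>B :: nat \<Rightarrow> 's set.
        (\<forall>j<n. is_arc X u1 u2 (B j)) \<and>
        (\<forall>j<n. \<forall>l<n. j \<noteq> l \<longrightarrow> B j \<inter> B l = {}) \<and>
        (\<Union>j<n. B j) = K)"

definition coloring_move ::
  "'s set \<Rightarrow> 'x set \<Rightarrow> ('x \<Rightarrow> 's) \<Rightarrow> ('x \<Rightarrow> 's) \<Rightarrow> ('x \<Rightarrow> 's)
   \<Rightarrow> 's set \<Rightarrow> ('s \<Rightarrow> 'c) \<Rightarrow> 's set \<Rightarrow> ('s \<Rightarrow> 'c) \<Rightarrow> bool" where
  "coloring_move S X ov u1 u2 A f A' f' \<longleftrightarrow>
     (\<exists>s\<in>S. s \<notin> A \<and> A' = insert s A \<and> (\<forall>t\<in>A. f' t = f t) \<and>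
        (\<exists>x\<in>X. ov x \<in> A \<and>
           ((u1 x \<in> A \<and> u2 x = s \<and> f' s = f (u1 x)) \<or>
            (u2 x \<in> A \<and> u1 x = s \<and> f' s = f (u2 x)))))"

end

theory Submission
  imports Defs
begin

lemma joined_sym: "joined X u1 u2 a b \<Longrightarrow> joined X u1 u2 b a"
  unfolding joined_def by blast

lemma mid_no_join:
  assumes dg: "diagram S X ov u1 u2 E es ev" and d: "distinct xs"
    and j: "\<forall>i. Suc i < length xs \<longrightarrow> joined X u1 u2 (xs!i) (xs!Suc i)"
    and k: "0<k" "Suc k < length xs" and js: "joined X u1 u2 (xs!k) s" and sn: "s \<notin> set xs"
  shows False
proof -
  define t where "t = xs!k"
  define a where "a = xs!(k - 1)"
  define b where "b = xs!Suc k"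
  have ja: "joined X u1 u2 a t" using j k unfolding a_def t_def
    by (metis Suc_diff_1 Suc_lessD)
  have jb: "joined X u1 u2 t b" using j k unfolding b_def t_def by blast
  have at: "a \<noteq> t" "b \<noteq> t" "a \<noteq> b" using d k unfolding a_def b_def t_def
    by (auto simp: nth_eq_iff_index_eq)
  have "a \<in> set xs" "b \<in> set xs" using k unfolding a_def b_def by auto
  then have sab: "s \<noteq> a" "s \<noteq> b" "s \<noteq> t" using sn k unfolding t_def by auto
  obtain x1 where x1: "x1 \<in> X" "(u1 x1 = a \<and> u2 x1 = t) \<or> (u1 x1 = t \<and> u2 x1 = a)"
    using ja unfolding joined_def by blast
  obtain x2 where x2: "x2 \<in> X" "(u1 x2 = t \<and> u2 x2 = b) \<or> (u1 x2 = b \<and> u2 x2 = t)"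
    using jb unfolding joined_def by blast
  obtain x3 where x3: "x3 \<in> X" "(u1 x3 = t \<and> u2 x3 = s) \<or> (u1 x3 = s \<and> u2 x3 = t)"
    using js unfolding joined_def t_def by blast
  have ne1: "x1 \<noteq> x2" using x1(2) x2(2) at(1,2,3) by metis
  have ne2: "x1 \<noteq> x3" using x1(2) x3(2) at(1) sab(1,3) by metis
  have ne3: "x2 \<noteq> x3" using x2(2) x3(2) at(2) sab(2,3) by metis
  have tS: "t \<in> S" using dg x1 unfolding diagram_def by auto
  define A1 where "A1 = {x\<in>X. u1 x = t}"
  define A2 where "A2 = {x\<in>X. u2 x = t}"
  have fin: "finite X" using dg unfolding diagram_def by auto
  have "card A1 + card A2 + card {e\<in>E. es e = t} = 2"
    using dg tS unfolding diagram_def A1_def A2_def by auto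
  then have c2: "card (A1 \<union> A2) \<le> 2" using card_Un_le[of A1 A2] by linarith
  have "{x1,x2,x3} \<subseteq> A1 \<union> A2" unfolding A1_def A2_def using x1(1) x2(1) x3(1) x1(2) x2(2) x3(2) by blast
  moreover have "finite (A1 \<union> A2)" using fin unfolding A1_def A2_def by auto
  ultimately have "card {x1,x2,x3} \<le> card (A1 \<union> A2)" by (rule card_mono[rotated])
  with c2 have "card {x1,x2,x3} \<le> 2" by linarith
  with ne1 ne2 ne3 show False by simp
qed

lemma arc_extend:
  assumes dg: "diagram S X ov u1 u2 E es ev" and arc: "is_arc X u1 u2 K"
    and t: "t \<in> K" and s: "s \<notin> K" and js: "joined X u1 u2 t s"
  shows "is_arc X u1 u2 (insert s K)"
proof -
  obtain xs where xs: "xs \<noteq> []" "distinct xs" "set xs = K"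
    "\<forall>i. Suc i < length xs \<longrightarrow> joined X u1 u2 (xs ! i) (xs ! Suc i)"
    using arc unfolding is_arc_def by blast
  obtain k where k: "k < length xs" "xs!k = t" using t xs(3) by (metis in_set_conv_nth)
  have "k = 0 \<or> Suc k = length xs"
  proof (rule ccontr)
    assume "\<not> ?thesis"
    then have "0 < k" "Suc k < length xs" using k by auto
    then show False using mid_no_join[OF dg xs(2) xs(4) _ _ _] js k s xs(3) by blast
  qed
  then show ?thesis
  proof
    assume k0: "k = 0"
    have "\<forall>i. Suc i < length (s#xs) \<longrightarrow> joined X u1 u2 ((s#xs) ! i) ((s#xs) ! Suc i)"
    proof (intro allI impI)
      fix i assume "Suc i < length (s#xs)"
      then show "joined X u1 u2 ((s#xs) ! i) ((s#xs) ! Suc i)"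
        using xs(4) joined_sym[OF js] k k0 by (cases i) auto
    qed
    then show ?thesis unfolding is_arc_def using xs s
      by (intro exI[of _ "s#xs"]) auto
  next
    assume kl: "Suc k = length xs"
    have "\<forall>i. Suc i < length (xs@[s]) \<longrightarrow> joined X u1 u2 ((xs@[s]) ! i) ((xs@[s]) ! Suc i)"
    proof (intro allI impI)
      fix i assume i: "Suc i < length (xs@[s])"
      show "joined X u1 u2 ((xs@[s]) ! i) ((xs@[s]) ! Suc i)"
      proof (cases "Suc i < length xs")
        case True then show ?thesis using xs(4) by (simp add: nth_append)
      next
        case False
        then have "i = k" using i kl by simp
        then show ?thesis using js k kl by (simp add: nth_append)
      qed
    qed
    then show ?thesis unfolding is_arc_def using xs s
      by (intro exI[of _ "xs@[s]"]) auto
  qed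
qed

lemma union_extend:
  assumes dg: "diagram S X ov u1 u2 E es ev" and U: "union_of_disjoint_arcs X u1 u2 n K"
    and t: "t \<in> K" and s: "s \<notin> K" and js: "joined X u1 u2 t s"
  shows "union_of_disjoint_arcs X u1 u2 n (insert s K)"
proof -
  obtain B where B: "\<forall>j<n. is_arc X u1 u2 (B j)" "\<forall>j<n. \<forall>l<n. j \<noteq> l \<longrightarrow> B j \<inter> B l = {}"
    "(\<Union>j<n. B j) = K" using U unfolding union_of_disjoint_arcs_def by blast
  obtain j where j: "j < n" "t \<in> B j" using B(3) t by blast
  have sj: "s \<notin> B l" if "l < n" for l using B(3) s that by blast
  define B' where "B' = B(j := insert s (B j))"
  have "\<forall>l<n. is_arc X u1 u2 (B' l)"
    using B(1) arc_extend[OF dg _ j(2) sj[OF j(1)] js] j unfolding B'_def by auto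
  moreover have "\<forall>l<n. \<forall>m<n. l \<noteq> m \<longrightarrow> B' l \<inter> B' m = {}"
    using B(2) sj unfolding B'_def by auto
  moreover have "(\<Union>l<n. B' l) = insert s K"
    using B(3) j unfolding B'_def by (auto split: if_splits)
  ultimately show ?thesis unfolding union_of_disjoint_arcs_def by blast
qed

theorem lemma3p1:
  fixes S :: "'s set" and X :: "'x set" and ov u1 u2 :: "'x \<Rightarrow> 's"
    and E :: "'e set" and es :: "'e \<Rightarrow> 's" and ev :: "'e \<Rightarrow> 'v"
    and C :: "'c set" and seed :: "'c \<Rightarrow> 's set"
    and A :: "nat \<Rightarrow> 's set" and f :: "nat \<Rightarrow> 's \<Rightarrow> 'c" and N :: nat
  assumes "diagram S X ov u1 u2 E es ev"
    and "finite C"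
    and "\<forall>c\<in>C. (\<exists>s\<in>S. seed c = {s}) \<or>
                 (\<exists>v. 2 < vdegree E ev v \<and> seed c = pod E es ev v)"
    and "A 0 = (\<Union>c\<in>C. seed c)"
    and "\<forall>c\<in>C. \<forall>s\<in>seed c. f 0 s = c"
    and "\<forall>i<N. coloring_move S X ov u1 u2 (A i) (f i) (A (Suc i)) (f (Suc i))"
  shows "\<forall>i\<le>N. \<forall>c\<in>C.
           (\<forall>s\<in>S. seed c = {s} \<longrightarrow> is_arc X u1 u2 {t\<in>A i. f i t = c}) \<and>
           (\<forall>v. 2 < vdegree E ev v \<and> seed c = pod E es ev v \<longrightarrow>
                union_of_disjoint_arcs X u1 u2 (card (pod E es ev v)) {t\<in>A i. f i t = c})"
proof (rule allI, rule impI, rule ballI, rule conjI)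
  fix i c assume iN: "i \<le> N" and c: "c \<in> C"
  have fin: "finite (seed c)"
  proof -
    have "finite E" using assms(1) unfolding diagram_def by auto
    then show ?thesis using assms(3) c unfolding pod_def by auto
  qed
  have base: "{t\<in>A 0. f 0 t = c} = seed c"
    using assms(4,5) c by auto
  have U0: "union_of_disjoint_arcs X u1 u2 (card (seed c)) (seed c)"
  proof -
    obtain h where h: "bij_betw h {0..<card (seed c)} (seed c)"
      using ex_bij_betw_nat_finite[OF fin] by blast
    define B where "B = (\<lambda>j. {h j})"
    have "\<forall>j<card (seed c). is_arc X u1 u2 (B j)" unfolding B_def is_arc_def
      by (intro allI impI exI[of _ "[h _]"]) auto
    moreover have "\<forall>j<card (seed c). \<forall>l<card (seed c). j \<noteq> l \<longrightarrow> B j \<inter> B l = {}"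
      using h unfolding B_def bij_betw_def inj_on_def by auto
    moreover have "(\<Union>j<card (seed c). B j) = seed c"
      using h unfolding B_def bij_betw_def by (auto simp: lessThan_atLeast0)
    ultimately show ?thesis unfolding union_of_disjoint_arcs_def by blast
  qed
  have inv: "union_of_disjoint_arcs X u1 u2 (card (seed c)) {t\<in>A i. f i t = c}"
    using iN
  proof (induction i)
    case 0 then show ?case using base U0 by simp
  next
    case (Suc i)
    then have IH: "union_of_disjoint_arcs X u1 u2 (card (seed c)) {t\<in>A i. f i t = c}"
      by simp
    have "coloring_move S X ov u1 u2 (A i) (f i) (A (Suc i)) (f (Suc i))"
      using assms(6) Suc.prems by simp
    then obtain s x where s: "s \<notin> A i" "A (Suc i) = insert s (A i)"
      "\<forall>t\<in>A i. f (Suc i) t = f i t" and x: "x \<in> X" "ov x \<in> A i"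
      "(u1 x \<in> A i \<and> u2 x = s \<and> f (Suc i) s = f i (u1 x)) \<or>
       (u2 x \<in> A i \<and> u1 x = s \<and> f (Suc i) s = f i (u2 x))"
      unfolding coloring_move_def by blast
    show ?case
    proof (cases "f (Suc i) s = c")
      case False
      then have "{t\<in>A (Suc i). f (Suc i) t = c} = {t\<in>A i. f i t = c}" using s by auto
      then show ?thesis using IH by simp
    next
      case True
      then have eq: "{t\<in>A (Suc i). f (Suc i) t = c} = insert s {t\<in>A i. f i t = c}"
        using s by auto
      obtain t where t: "t \<in> {t\<in>A i. f i t = c}" "joined X u1 u2 t s"
      proof (cases "u1 x \<in> A i \<and> u2 x = s \<and> f (Suc i) s = f i (u1 x)")
        case True2: True
        have "joined X u1 u2 (u1 x) s" unfolding joined_def using x(1) True2 by blast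
        then show ?thesis using that True2 True by auto
      next
        case False
        then have F: "u2 x \<in> A i \<and> u1 x = s \<and> f (Suc i) s = f i (u2 x)" using x(3) by blast
        have "joined X u1 u2 (u2 x) s" unfolding joined_def using x(1) F by blast
        then show ?thesis using that F True by auto
      qed
      show ?thesis unfolding eq
        by (rule union_extend[OF assms(1) IH t(1) _ t(2)]) (use s in auto)
    qed
  qed
  show "\<forall>s\<in>S. seed c = {s} \<longrightarrow> is_arc X u1 u2 {t\<in>A i. f i t = c}"
  proof (intro ballI impI)
    fix s assume "seed c = {s}"
    then have "union_of_disjoint_arcs X u1 u2 1 {t\<in>A i. f i t = c}" using inv by simp
    then obtain B where "is_arc X u1 u2 (B 0)" "(\<Union>j<(1::nat). B j) = {t\<in>A i. f i t = c}"
      unfolding union_of_disjoint_arcs_def by auto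
    moreover have "{..<(1::nat)} = {0}" by auto
    ultimately show "is_arc X u1 u2 {t\<in>A i. f i t = c}" by simp
  qed
  show "\<forall>v. 2 < vdegree E ev v \<and> seed c = pod E es ev v \<longrightarrow>
                union_of_disjoint_arcs X u1 u2 (card (pod E es ev v)) {t\<in>A i. f i t = c}"
  proof (intro allI impI)
    fix v assume h: "2 < vdegree E ev v \<and> seed c = pod E es ev v"
    then have "pod E es ev v = seed c" by simp
    then show "union_of_disjoint_arcs X u1 u2 (card (pod E es ev v)) {t\<in>A i. f i t = c}"
      using inv by simp
  qed
qed

end
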